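(* Let $G$ be a periodic hypercentral group. If $G$ contains a finite contranormal subgroup, then $G$ has a normal abelian subgroup of finite index.
   Context: A subgroup $H$ of $G$ is contranormal in $G$ if its normal closure $H^G$ equals $G$. *)

theory Defs
  imports "HOL-Algebra.Algebra"
begin

definition periodic_group :: "('a, 'b) monoid_scheme \<Rightarrow> bool" where
  "periodic_group G \<longleftrightarrow> (\<forall>g\<in>carrier G. \<exists>n::nat. n > 0 \<and> g [^]\<^bsub>G\<^esub> n = \<one>\<^bsub>G\<^esub>)"

text \<open>One step of the upper central series: given H (= Z_alpha), the next term
  consists of the elements whose commutators with all of G lie in H
  (i.e. the preimage of the centre of G/H).  The hypercentre (the terminal term
  of the transfinite upper central series, starting at 1 and taking unions at
  limit ordinals) is the least fixed point of this monotone operator.\<close>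
definition central_step :: "('a, 'b) monoid_scheme \<Rightarrow> 'a set \<Rightarrow> 'a set" where
  "central_step G H = insert \<one>\<^bsub>G\<^esub>
     {g \<in> carrier G. \<forall>x\<in>carrier G.
        g \<otimes>\<^bsub>G\<^esub> x \<otimes>\<^bsub>G\<^esub> inv\<^bsub>G\<^esub> g \<otimes>\<^bsub>G\<^esub> inv\<^bsub>G\<^esub> x \<in> H}"

definition hypercenter :: "('a, 'b) monoid_scheme \<Rightarrow> 'a set" where
  "hypercenter G = lfp (central_step G)"

definition hypercentral :: "('a, 'b) monoid_scheme \<Rightarrow> bool" where
  "hypercentral G \<longleftrightarrow> hypercenter G = carrier G"

definition normal_closure :: "('a, 'b) monoid_scheme \<Rightarrow> 'a set \<Rightarrow> 'a set" where
  "normal_closure G H = generate G {g \<otimes>\<^bsub>G\<^esub> h \<otimes>\<^bsub>G\<^esub> inv\<^bsub>G\<^esub> g | g h. g \<in> carrier G \<and> h \<in> H}"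

definition contranormal :: "('a, 'b) monoid_scheme \<Rightarrow> 'a set \<Rightarrow> bool" where
  "contranormal G H \<longleftrightarrow> subgroup H G \<and> normal_closure G H = carrier G"

end

theory Submission
  imports Defs
begin

definition cm :: "('a,'b) monoid_scheme \<Rightarrow> 'a \<Rightarrow> 'a \<Rightarrow> 'a" where
  "cm G x y = x \<otimes>\<^bsub>G\<^esub> y \<otimes>\<^bsub>G\<^esub> inv\<^bsub>G\<^esub> x \<otimes>\<^bsub>G\<^esub> inv\<^bsub>G\<^esub> y"

primrec Kser :: "('a,'b) monoid_scheme \<Rightarrow> nat \<Rightarrow> 'a set" where
  "Kser G 0 = carrier G"
| "Kser G (Suc n) = generate G {cm G k x | k x. k \<in> Kser G n \<and> x \<in> carrier G}"

primrec Wser :: "('a,'b) monoid_scheme \<Rightarrow> 'a set \<Rightarrow> 'a set \<Rightarrow> nat \<Rightarrow> 'a set" where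
  "Wser G L N 0 = N"
| "Wser G L N (Suc k) = {y \<in> L. \<forall>x\<in>carrier G. cm G y x \<in> Wser G L N k}"

context group begin

lemma gc1 [simp]: "x \<in> carrier G \<Longrightarrow> y \<in> carrier G \<Longrightarrow> x \<otimes> (inv x \<otimes> y) = y"
  by (simp add: m_assoc[symmetric])
lemma gc2 [simp]: "x \<in> carrier G \<Longrightarrow> y \<in> carrier G \<Longrightarrow> inv x \<otimes> (x \<otimes> y) = y"
  by (simp add: m_assoc[symmetric])

lemma cm_closed [simp]: "x \<in> carrier G \<Longrightarrow> y \<in> carrier G \<Longrightarrow> cm G x y \<in> carrier G"
  by (simp add: cm_def)

lemma cm_one_left [simp]: "x \<in> carrier G \<Longrightarrow> cm G \<one> x = \<one>"
  by (simp add: cm_def)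

lemma cm_one_right [simp]: "x \<in> carrier G \<Longrightarrow> cm G x \<one> = \<one>"
  by (simp add: cm_def)

lemma cm_mult_left: "x \<in> carrier G \<Longrightarrow> y \<in> carrier G \<Longrightarrow> z \<in> carrier G \<Longrightarrow>
  cm G (y \<otimes> z) x = y \<otimes> cm G z x \<otimes> inv y \<otimes> cm G y x"
  by (simp add: cm_def m_assoc inv_mult_group)

lemma cm_mult_right: "g \<in> carrier G \<Longrightarrow> y \<in> carrier G \<Longrightarrow> z \<in> carrier G \<Longrightarrow>
  cm G g (y \<otimes> z) = cm G g y \<otimes> (y \<otimes> cm G g z \<otimes> inv y)"
  by (simp add: cm_def m_assoc inv_mult_group)

lemma cm_inv_left: "x \<in> carrier G \<Longrightarrow> y \<in> carrier G \<Longrightarrow>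
  cm G (inv y) x = inv y \<otimes> inv (cm G y x) \<otimes> y"
  by (simp add: cm_def m_assoc inv_mult_group)

lemma cm_conj: "x \<in> carrier G \<Longrightarrow> y \<in> carrier G \<Longrightarrow> g \<in> carrier G \<Longrightarrow>
  g \<otimes> cm G y x \<otimes> inv g = cm G (g \<otimes> y \<otimes> inv g) (g \<otimes> x \<otimes> inv g)"
  by (simp add: cm_def m_assoc inv_mult_group)

lemma cm_conj2: "x \<in> carrier G \<Longrightarrow> y \<in> carrier G \<Longrightarrow> g \<in> carrier G \<Longrightarrow>
  cm G (g \<otimes> y \<otimes> inv g) x = g \<otimes> cm G y (inv g \<otimes> x \<otimes> g) \<otimes> inv g"
  by (simp add: cm_def m_assoc inv_mult_group)

lemma cm_split: "x \<in> carrier G \<Longrightarrow> y \<in> carrier G \<Longrightarrow> cm G y x = y \<otimes> (x \<otimes> inv y \<otimes> inv x)"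
  by (simp add: cm_def m_assoc)

lemma cm_split2: "x \<in> carrier G \<Longrightarrow> y \<in> carrier G \<Longrightarrow> cm G y x = (y \<otimes> x \<otimes> inv y) \<otimes> inv x"
  by (simp add: cm_def m_assoc)

lemma cm_eq_one: "x \<in> carrier G \<Longrightarrow> y \<in> carrier G \<Longrightarrow> cm G x y = \<one> \<longleftrightarrow> x \<otimes> y = y \<otimes> x"
proof -
  assume xy: "x \<in> carrier G" "y \<in> carrier G"
  have e: "cm G x y = (x \<otimes> y) \<otimes> inv (y \<otimes> x)" using xy by (simp add: cm_def m_assoc inv_mult_group)
  have e2: "x \<otimes> y = ((x \<otimes> y) \<otimes> inv (y \<otimes> x)) \<otimes> (y \<otimes> x)" using xy by (simp add: m_assoc)
  show ?thesis
  proof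
    assume "cm G x y = \<one>" thus "x \<otimes> y = y \<otimes> x" using e e2 xy by simp
  next
    assume "x \<otimes> y = y \<otimes> x" thus "cm G x y = \<one>" using e xy by simp
  qed
qed

lemma hyp_induct:
  assumes "hypercentral G" "\<one> \<in> S"
    "\<And>g. g \<in> carrier G \<Longrightarrow> \<forall>x\<in>carrier G. cm G g x \<in> S \<Longrightarrow> g \<in> S"
  shows "carrier G \<subseteq> S"
proof -
  have "central_step G S \<subseteq> S"
  proof
    fix g assume "g \<in> central_step G S"
    hence "g = \<one> \<or> (g \<in> carrier G \<and> (\<forall>x\<in>carrier G. cm G g x \<in> S))"
      unfolding central_step_def cm_def by blast
    thus "g \<in> S" using assms(2,3) by blast
  qed
  hence "lfp (central_step G) \<subseteq> S" by (rule lfp_lowerbound)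
  thus ?thesis using assms(1) unfolding hypercentral_def hypercenter_def by simp
qed

lemma hyp_section:
  assumes "hypercentral G" "U \<subseteq> carrier G" "\<one> \<in> M"
    "\<And>u x. u \<in> U \<Longrightarrow> x \<in> carrier G \<Longrightarrow> cm G u x \<in> U" "\<not> U \<subseteq> M"
  shows "\<exists>u\<in>U. u \<notin> M \<and> (\<forall>x\<in>carrier G. cm G u x \<in> M)"
proof (rule ccontr)
  assume nex: "\<not> ?thesis"
  have "carrier G \<subseteq> {g. g \<in> U \<longrightarrow> g \<in> M}"
  proof (rule hyp_induct[OF assms(1)])
    show "\<one> \<in> {g. g \<in> U \<longrightarrow> g \<in> M}" using assms(3) by simp
    fix g assume g: "g \<in> carrier G" "\<forall>x\<in>carrier G. cm G g x \<in> {g. g \<in> U \<longrightarrow> g \<in> M}"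
    show "g \<in> {g. g \<in> U \<longrightarrow> g \<in> M}"
    proof (clarsimp)
      assume "g \<in> U"
      hence "\<forall>x\<in>carrier G. cm G g x \<in> M" using g assms(4) by blast
      thus "g \<in> M" using nex \<open>g \<in> U\<close> by blast
    qed
  qed
  thus False using assms(2,5) by blast
qed

lemma subgroup_pow_closed: "subgroup K G \<Longrightarrow> a \<in> K \<Longrightarrow> a [^] (k::nat) \<in> K"
  by (induction k) (auto simp: subgroup.one_closed subgroup.m_closed)

lemma Kser_normal: "Kser G n \<lhd> G"
proof (induction n)
  case 0 thus ?case by (simp add: normal_self)
next
  case (Suc n)
  have sub: "Kser G n \<subseteq> carrier G" using Suc normal_imp_subgroup subgroup.subset by blast
  show ?case unfolding Kser.simps
  proof (rule normal_generateI)
    show "{cm G k x |k x. k \<in> Kser G n \<and> x \<in> carrier G} \<subseteq> carrier G" using sub by auto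
    fix h g assume h: "h \<in> {cm G k x |k x. k \<in> Kser G n \<and> x \<in> carrier G}" and g: "g \<in> carrier G"
    then obtain k x where kx: "h = cm G k x" "k \<in> Kser G n" "x \<in> carrier G" by blast
    have "g \<otimes> h \<otimes> inv g = cm G (g \<otimes> k \<otimes> inv g) (g \<otimes> x \<otimes> inv g)"
      using kx g sub cm_conj[of x k g] by blast
    moreover have "g \<otimes> k \<otimes> inv g \<in> Kser G n" by (rule normal.inv_op_closed2[OF Suc g kx(2)])
    ultimately show "g \<otimes> h \<otimes> inv g \<in> {cm G k x |k x. k \<in> Kser G n \<and> x \<in> carrier G}"
      using g kx by blast
  qed
qed

lemma Kser_sub_carrier: "Kser G n \<subseteq> carrier G"
  using Kser_normal normal_imp_subgroup subgroup.subset by blast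

lemma Kser_Suc_sub: "Kser G (Suc n) \<subseteq> Kser G n"
proof -
  have sg: "subgroup (Kser G n) G" using Kser_normal normal_imp_subgroup by blast
  have "{cm G k x |k x. k \<in> Kser G n \<and> x \<in> carrier G} \<subseteq> Kser G n"
  proof clarify
    fix k x assume k: "k \<in> Kser G n" and x: "x \<in> carrier G"
    have kc: "k \<in> carrier G" using k Kser_sub_carrier by blast
    have "inv k \<in> Kser G n" by (rule subgroup.m_inv_closed[OF sg k])
    hence "x \<otimes> inv k \<otimes> inv x \<in> Kser G n" by (rule normal.inv_op_closed2[OF Kser_normal x])
    hence "k \<otimes> (x \<otimes> inv k \<otimes> inv x) \<in> Kser G n" by (rule subgroup.m_closed[OF sg k])
    thus "cm G k x \<in> Kser G n" using cm_split[OF x kc] by simp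
  qed
  thus ?thesis unfolding Kser.simps using generate_subgroup_incl sg by blast
qed

lemma Kser_antimono: "m \<le> n \<Longrightarrow> Kser G n \<subseteq> Kser G m"
proof (induction n rule: dec_induct)
  case base show ?case by simp
next
  case (step n) thus ?case using Kser_Suc_sub[of n] by blast
qed

end

context group begin

lemma pow_mod_eq: assumes "a \<in> carrier G" "a [^] (m::nat) = \<one>"
  shows "a [^] (k::nat) = a [^] (k mod m)"
proof -
  have "a [^] k = a [^] (m * (k div m) + k mod m)" by (simp only: mult_div_mod_eq)
  also have "\<dots> = a [^] (m * (k div m)) \<otimes> a [^] (k mod m)" by (rule nat_pow_mult[symmetric, OF assms(1)])
  also have "\<dots> = (a [^] m) [^] (k div m) \<otimes> a [^] (k mod m)" by (simp only: nat_pow_pow[OF assms(1)])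
  also have "\<dots> = \<one> \<otimes> a [^] (k mod m)" by (simp only: assms(2) nat_pow_one)
  also have "\<dots> = a [^] (k mod m)" using assms(1) by (rule l_one[OF nat_pow_closed])
  finally show ?thesis .
qed

lemma centralizer_subgroup: assumes "a \<in> carrier G"
  shows "subgroup {z \<in> carrier G. a \<otimes> z = z \<otimes> a} G"
proof (rule subgroupI)
  show "{z \<in> carrier G. a \<otimes> z = z \<otimes> a} \<subseteq> carrier G" by blast
  show "{z \<in> carrier G. a \<otimes> z = z \<otimes> a} \<noteq> {}" using assms by auto
  fix z assume z: "z \<in> {z \<in> carrier G. a \<otimes> z = z \<otimes> a}"
  hence zc: "z \<in> carrier G" and e: "a \<otimes> z = z \<otimes> a" by auto
  have "a \<otimes> inv z = inv z \<otimes> (z \<otimes> a) \<otimes> inv z" using zc assms by (simp add: m_assoc)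
  also have "\<dots> = inv z \<otimes> (a \<otimes> z) \<otimes> inv z" using e by simp
  also have "\<dots> = inv z \<otimes> a" using zc assms by (simp add: m_assoc)
  finally show "inv z \<in> {z \<in> carrier G. a \<otimes> z = z \<otimes> a}" using zc by simp
next
  fix z w assume z: "z \<in> {z \<in> carrier G. a \<otimes> z = z \<otimes> a}" and w: "w \<in> {z \<in> carrier G. a \<otimes> z = z \<otimes> a}"
  hence zc: "z \<in> carrier G" "a \<otimes> z = z \<otimes> a" and wc: "w \<in> carrier G" "a \<otimes> w = w \<otimes> a" by auto
  have "a \<otimes> (z \<otimes> w) = (a \<otimes> z) \<otimes> w" using m_assoc[OF assms zc(1) wc(1)] by simp
  also have "\<dots> = (z \<otimes> a) \<otimes> w" using zc by simp
  also have "\<dots> = z \<otimes> (a \<otimes> w)" using m_assoc[OF zc(1) assms wc(1)] by simp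
  also have "\<dots> = z \<otimes> (w \<otimes> a)" using wc by simp
  also have "\<dots> = (z \<otimes> w) \<otimes> a" using m_assoc[OF zc(1) wc(1) assms] by simp
  finally show "z \<otimes> w \<in> {z \<in> carrier G. a \<otimes> z = z \<otimes> a}" using zc wc by simp
qed

lemma gen_comm_bound:
  assumes "finite S" "S \<subseteq> carrier G" "\<And>a b. a \<in> S \<Longrightarrow> b \<in> S \<Longrightarrow> a \<otimes> b = b \<otimes> a"
    "\<And>a. a \<in> S \<Longrightarrow> a [^] m = \<one>" "0 < (m::nat)"
  shows "finite (generate G S) \<and> card (generate G S) \<le> m ^ card S"
  using assms
proof (induction S rule: finite_induct)
  case empty
  thus ?case by (simp add: generate_empty)
next
  case (insert a S)
  define T where "T = generate G S"
  have ac: "a \<in> carrier G" and Sc: "S \<subseteq> carrier G" using insert.prems(1) by auto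
  have am: "a [^] m = \<one>" using insert.prems(3) by blast
  have mpos: "0 < m" by (rule insert.prems(4))
  have IH: "finite T \<and> card T \<le> m ^ card S" unfolding T_def
  proof (rule insert.IH)
    show "S \<subseteq> carrier G" by (rule Sc)
    show "\<And>a b. a \<in> S \<Longrightarrow> b \<in> S \<Longrightarrow> a \<otimes> b = b \<otimes> a" using insert.prems(2) by blast
    show "\<And>a. a \<in> S \<Longrightarrow> a [^] m = \<one>" using insert.prems(3) by blast
    show "0 < m" by (rule mpos)
  qed
  have Tsg: "subgroup T G" unfolding T_def by (rule generate_is_subgroup[OF Sc])
  have Tc: "T \<subseteq> carrier G" using Tsg subgroup.subset by blast
  have Tcomm: "T \<subseteq> {z \<in> carrier G. a \<otimes> z = z \<otimes> a}"
  proof -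
    have "S \<subseteq> {z \<in> carrier G. a \<otimes> z = z \<otimes> a}" using Sc insert.prems(2) by blast
    thus ?thesis unfolding T_def by (rule generate_subgroup_incl[OF _ centralizer_subgroup[OF ac]])
  qed
  define XX where "XX = (\<lambda>(i,t). a [^] i \<otimes> t) ` ({..<m} \<times> T)"
  have XXmem: "x \<in> XX \<longleftrightarrow> (\<exists>i t. i < m \<and> t \<in> T \<and> x = a [^] i \<otimes> t)" for x
    unfolding XX_def by auto
  have aT: "t \<in> T \<Longrightarrow> a [^] (i::nat) \<otimes> t = t \<otimes> a [^] i" for t i
  proof -
    assume t: "t \<in> T"
    have "a \<otimes> t = t \<otimes> a" using Tcomm t by blast
    moreover have "t \<in> carrier G" using t Tc by blast
    ultimately show ?thesis using group_commutes_pow ac by blast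
  qed
  have XXsg: "subgroup XX G"
  proof (rule subgroupI)
    show "XX \<subseteq> carrier G" using Tc ac unfolding XX_def by auto
    have "\<one> = a [^] (0::nat) \<otimes> \<one>" by simp
    thus "XX \<noteq> {}" using XXmem mpos subgroup.one_closed[OF Tsg] by blast
  next
    fix x assume "x \<in> XX"
    then obtain i t where it: "i < m" "t \<in> T" "x = a [^] i \<otimes> t" using XXmem by blast
    have tc: "t \<in> carrier G" using it Tc by blast
    have ip: "inv (a [^] i) = a [^] ((m - i) mod m)"
    proof -
      have "a [^] (m - i) \<otimes> a [^] i = \<one>" using ac it am by (simp add: nat_pow_mult)
      hence "inv (a [^] i) = a [^] (m - i)" using ac by (intro inv_equality) auto
      also have "\<dots> = a [^] ((m - i) mod m)" by (rule pow_mod_eq[OF ac am])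
      finally show ?thesis .
    qed
    have "inv x = inv t \<otimes> inv (a [^] i)" using it tc ac by (simp add: inv_mult_group)
    also have "\<dots> = inv (a [^] i) \<otimes> inv t"
      using aT[of "inv t" "(m - i) mod m"] ip subgroup.m_inv_closed[OF Tsg it(2)] by simp
    also have "\<dots> = a [^] ((m - i) mod m) \<otimes> inv t" using ip by simp
    finally have ix: "inv x = a [^] ((m - i) mod m) \<otimes> inv t" .
    have "(m - i) mod m < m" using mpos by simp
    thus "inv x \<in> XX" using XXmem ix subgroup.m_inv_closed[OF Tsg it(2)] by blast
  next
    fix x y assume "x \<in> XX" "y \<in> XX"
    then obtain i t j s where it: "i < m" "t \<in> T" "x = a [^] i \<otimes> t"
      and js: "j < m" "s \<in> T" "y = a [^] j \<otimes> s" using XXmem by meson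
    have tc: "t \<in> carrier G" "s \<in> carrier G" using it js Tc by auto
    have "x \<otimes> y = a [^] i \<otimes> (t \<otimes> a [^] j) \<otimes> s" using it js tc ac by (simp add: m_assoc)
    also have "\<dots> = a [^] i \<otimes> (a [^] j \<otimes> t) \<otimes> s" using aT[OF it(2)] by simp
    also have "\<dots> = a [^] (i + j) \<otimes> (t \<otimes> s)" using tc ac by (simp add: m_assoc[symmetric] nat_pow_mult)
    also have "\<dots> = a [^] ((i + j) mod m) \<otimes> (t \<otimes> s)" using pow_mod_eq[OF ac am, of "i+j"] by simp
    finally have ix: "x \<otimes> y = a [^] ((i + j) mod m) \<otimes> (t \<otimes> s)" .
    have "(i + j) mod m < m" using mpos by simp
    thus "x \<otimes> y \<in> XX" using XXmem ix subgroup.m_closed[OF Tsg it(2) js(2)] by blast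
  qed
  have "insert a S \<subseteq> XX"
  proof
    fix z assume "z \<in> insert a S"
    then consider "z = a" | "z \<in> S" by blast
    thus "z \<in> XX"
    proof cases
      case 1
      have "a = a [^] (1::nat)" using ac by simp
      also have "\<dots> = a [^] (1 mod m) \<otimes> \<one>" using pow_mod_eq[OF ac am, of 1] ac by simp
      finally have ix: "a = a [^] (1 mod m) \<otimes> \<one>" .
      have "1 mod m < m" using mpos by simp
      thus ?thesis using 1 XXmem ix subgroup.one_closed[OF Tsg] by blast
    next
      case 2
      hence "z \<in> T" unfolding T_def by (rule generate.incl)
      moreover have "z = a [^] (0::nat) \<otimes> z" using 2 Sc by auto
      ultimately show ?thesis using XXmem mpos by blast
    qed
  qed
  hence sub: "generate G (insert a S) \<subseteq> XX" using generate_subgroup_incl XXsg by blast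
  have finXX: "finite XX" unfolding XX_def using IH by auto
  have "card XX \<le> card ({..<m} \<times> T)" unfolding XX_def by (rule card_image_le) (use IH in auto)
  also have "\<dots> = m * card T" by (simp add: card_cartesian_product)
  also have "\<dots> \<le> m * m ^ card S" using IH by simp
  also have "\<dots> = m ^ card (insert a S)" using insert(1,2) by simp
  finally have cX: "card XX \<le> m ^ card (insert a S)" .
  have "card (generate G (insert a S)) \<le> card XX" by (rule card_mono[OF finXX sub])
  thus ?case using cX finite_subset[OF sub finXX] by simp
qed

end

context group begin

lemma Wser_props:
  assumes L: "L \<lhd> G" and N: "N \<lhd> G" and NL: "N \<subseteq> L"
  shows "Wser G L N k \<lhd> G \<and> N \<subseteq> Wser G L N k \<and> Wser G L N k \<subseteq> L"
proof (induction k)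
  case 0 thus ?case using N NL by simp
next
  case (Suc k)
  define W where "W = Wser G L N k"
  have Wn: "W \<lhd> G" and NW: "N \<subseteq> W" using Suc.IH unfolding W_def by blast+
  have Wsg: "subgroup W G" using Wn normal_imp_subgroup by blast
  have Lsg: "subgroup L G" using L normal_imp_subgroup by blast
  have Nsg: "subgroup N G" using N normal_imp_subgroup by blast
  have Lc: "L \<subseteq> carrier G" using Lsg subgroup.subset by blast
  have WS: "Wser G L N (Suc k) = {y \<in> L. \<forall>x\<in>carrier G. cm G y x \<in> W}" unfolding W_def by simp
  have sg: "subgroup {y \<in> L. \<forall>x\<in>carrier G. cm G y x \<in> W} G"
  proof (rule subgroupI)
    show "{y \<in> L. \<forall>x\<in>carrier G. cm G y x \<in> W} \<subseteq> carrier G" using Lc by blast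
    have "\<one> \<in> L" by (rule subgroup.one_closed[OF Lsg])
    moreover have "\<forall>x\<in>carrier G. cm G \<one> x \<in> W" using subgroup.one_closed[OF Wsg] by simp
    ultimately show "{y \<in> L. \<forall>x\<in>carrier G. cm G y x \<in> W} \<noteq> {}" by blast
  next
    fix y assume y: "y \<in> {y \<in> L. \<forall>x\<in>carrier G. cm G y x \<in> W}"
    hence yL: "y \<in> L" and yW: "\<forall>x\<in>carrier G. cm G y x \<in> W" by auto
    have yc: "y \<in> carrier G" using yL Lc by blast
    have "\<forall>x\<in>carrier G. cm G (inv y) x \<in> W"
    proof
      fix x assume x: "x \<in> carrier G"
      have "inv (cm G y x) \<in> W" using yW x subgroup.m_inv_closed[OF Wsg] by blast
      hence "inv y \<otimes> inv (cm G y x) \<otimes> y \<in> W" using normal.inv_op_closed1[OF Wn yc] by blast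
      thus "cm G (inv y) x \<in> W" using cm_inv_left[OF x yc] by simp
    qed
    moreover have "inv y \<in> L" using subgroup.m_inv_closed[OF Lsg yL] .
    ultimately show "inv y \<in> {y \<in> L. \<forall>x\<in>carrier G. cm G y x \<in> W}" by blast
  next
    fix y z assume y: "y \<in> {y \<in> L. \<forall>x\<in>carrier G. cm G y x \<in> W}"
      and z: "z \<in> {y \<in> L. \<forall>x\<in>carrier G. cm G y x \<in> W}"
    hence yL: "y \<in> L" and yW: "\<forall>x\<in>carrier G. cm G y x \<in> W"
      and zL: "z \<in> L" and zW: "\<forall>x\<in>carrier G. cm G z x \<in> W" by auto
    have yc: "y \<in> carrier G" and zc: "z \<in> carrier G" using yL zL Lc by auto
    have "\<forall>x\<in>carrier G. cm G (y \<otimes> z) x \<in> W"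
    proof
      fix x assume x: "x \<in> carrier G"
      have "y \<otimes> cm G z x \<otimes> inv y \<in> W" using normal.inv_op_closed2[OF Wn yc] zW x by blast
      hence "y \<otimes> cm G z x \<otimes> inv y \<otimes> cm G y x \<in> W" using subgroup.m_closed[OF Wsg] yW x by blast
      thus "cm G (y \<otimes> z) x \<in> W" using cm_mult_left[OF x yc zc] by simp
    qed
    moreover have "y \<otimes> z \<in> L" using subgroup.m_closed[OF Lsg yL zL] .
    ultimately show "y \<otimes> z \<in> {y \<in> L. \<forall>x\<in>carrier G. cm G y x \<in> W}" by blast
  qed
  have nm: "{y \<in> L. \<forall>x\<in>carrier G. cm G y x \<in> W} \<lhd> G"
  proof (rule normal_invI[OF sg])
    fix g y assume g: "g \<in> carrier G" and y: "y \<in> {y \<in> L. \<forall>x\<in>carrier G. cm G y x \<in> W}"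
    hence yL: "y \<in> L" and yW: "\<forall>x\<in>carrier G. cm G y x \<in> W" by auto
    have yc: "y \<in> carrier G" using yL Lc by blast
    have "\<forall>x\<in>carrier G. cm G (g \<otimes> y \<otimes> inv g) x \<in> W"
    proof
      fix x assume x: "x \<in> carrier G"
      have "inv g \<otimes> x \<otimes> g \<in> carrier G" using g x by simp
      hence "g \<otimes> cm G y (inv g \<otimes> x \<otimes> g) \<otimes> inv g \<in> W"
        using normal.inv_op_closed2[OF Wn g] yW by blast
      thus "cm G (g \<otimes> y \<otimes> inv g) x \<in> W" using cm_conj2[OF x yc g] by simp
    qed
    moreover have "g \<otimes> y \<otimes> inv g \<in> L" using normal.inv_op_closed2[OF L g yL] .
    ultimately show "g \<otimes> y \<otimes> inv g \<in> {y \<in> L. \<forall>x\<in>carrier G. cm G y x \<in> W}" by blast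
  qed
  have N': "N \<subseteq> {y \<in> L. \<forall>x\<in>carrier G. cm G y x \<in> W}"
  proof
    fix y assume yN: "y \<in> N"
    have yc: "y \<in> carrier G" using yN Nsg subgroup.subset by blast
    have "\<forall>x\<in>carrier G. cm G y x \<in> W"
    proof
      fix x assume x: "x \<in> carrier G"
      have "inv y \<in> N" using subgroup.m_inv_closed[OF Nsg yN] .
      hence "x \<otimes> inv y \<otimes> inv x \<in> N" by (rule normal.inv_op_closed2[OF N x])
      hence "y \<otimes> (x \<otimes> inv y \<otimes> inv x) \<in> N" by (rule subgroup.m_closed[OF Nsg yN])
      thus "cm G y x \<in> W" using cm_split[OF x yc] NW by auto
    qed
    thus "y \<in> {y \<in> L. \<forall>x\<in>carrier G. cm G y x \<in> W}" using yN NL by blast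
  qed
  show ?case unfolding WS using nm N' by blast
qed

lemma Wser_Suc_mono:
  assumes L: "L \<lhd> G" and N: "N \<lhd> G" and NL: "N \<subseteq> L"
  shows "Wser G L N k \<subseteq> Wser G L N (Suc k)"
proof (induction k)
  case 0 thus ?case using Wser_props[OF L N NL, of 1] by simp
next
  case (Suc k)
  show ?case
  proof
    fix y assume "y \<in> Wser G L N (Suc k)"
    hence yL: "y \<in> L" and yW: "\<forall>x\<in>carrier G. cm G y x \<in> Wser G L N k" by simp_all
    have "\<forall>x\<in>carrier G. cm G y x \<in> Wser G L N (Suc k)" using yW Suc.IH by blast
    thus "y \<in> Wser G L N (Suc (Suc k))" using yL by simp
  qed
qed

lemma Wser_mono:
  assumes L: "L \<lhd> G" and N: "N \<lhd> G" and NL: "N \<subseteq> L" and "k \<le> l"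
  shows "Wser G L N k \<subseteq> Wser G L N l"
  using assms(4)
proof (induction l rule: dec_induct)
  case base show ?case by simp
next
  case (step n) thus ?case using Wser_Suc_mono[OF L N NL, of n] by blast
qed

lemma Wser_top:
  assumes L: "L \<lhd> G" and N: "N \<lhd> G" and NL: "N \<subseteq> L"
    and gen: "generate G {cm G k x | k x. k \<in> L \<and> x \<in> carrier G} = L"
  shows "L \<subseteq> Wser G L N c \<Longrightarrow> L \<subseteq> N"
proof (induction c)
  case 0 thus ?case by simp
next
  case (Suc c)
  have sg: "subgroup (Wser G L N c) G" using Wser_props[OF L N NL, of c] normal_imp_subgroup by blast
  have "{cm G k x | k x. k \<in> L \<and> x \<in> carrier G} \<subseteq> Wser G L N c" using Suc.prems by force
  hence "generate G {cm G k x | k x. k \<in> L \<and> x \<in> carrier G} \<subseteq> Wser G L N c"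
    by (rule generate_subgroup_incl[OF _ sg])
  hence "L \<subseteq> Wser G L N c" using gen by simp
  thus ?case by (rule Suc.IH)
qed

end

locale cn = group G for G (structure) +
  fixes H
  assumes hyp: "hypercentral G" and per: "periodic_group G" and Hfin: "finite H"
    and Hsub: "subgroup H G" and ncl: "normal_closure G H = carrier G"
begin

lemma Hc: "H \<subseteq> carrier G" using Hsub subgroup.subset by blast

lemma KH: "g \<in> carrier G \<Longrightarrow> \<exists>k\<in>Kser G n. \<exists>h\<in>H. g = k \<otimes> h"
proof (induction n arbitrary: g)
  case 0
  thus ?case using subgroup.one_closed[OF Hsub] by force
next
  case (Suc n)
  define K' where "K' = Kser G (Suc n)"
  have K'n: "K' \<lhd> G" unfolding K'_def by (rule Kser_normal)
  have sgM: "subgroup (K' <#> H) G"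
    by (rule second_isomorphism_grp.normal_set_mult_subgroup)
       (simp add: second_isomorphism_grp_def second_isomorphism_grp_axioms_def K'n Hsub)
  have "{g \<otimes> h \<otimes> inv g | g h. g \<in> carrier G \<and> h \<in> H} \<subseteq> K' <#> H"
  proof clarify
    fix g h0 assume g: "g \<in> carrier G" and h0: "h0 \<in> H"
    obtain k h where kh: "k \<in> Kser G n" "h \<in> H" "g = k \<otimes> h" using Suc.IH[OF g] by blast
    have kc: "k \<in> carrier G" using kh Kser_sub_carrier by blast
    have hc: "h \<in> carrier G" "h0 \<in> carrier G" using kh h0 Hc by auto
    define h1 where "h1 = h \<otimes> h0 \<otimes> inv h"
    have h1H: "h1 \<in> H" unfolding h1_def using kh h0 Hsub
      by (meson subgroup.m_closed subgroup.m_inv_closed)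
    have h1c: "h1 \<in> carrier G" using h1H Hc by blast
    have eq: "g \<otimes> h0 \<otimes> inv g = cm G k h1 \<otimes> h1"
      unfolding kh(3) h1_def cm_def using kc hc by (simp add: m_assoc inv_mult_group)
    have "cm G k h1 \<in> K'" unfolding K'_def Kser.simps using kh(1) h1c
      by (intro generate.incl) blast
    thus "g \<otimes> h0 \<otimes> inv g \<in> K' <#> H" using eq h1H unfolding set_mult_def by blast
  qed
  hence "normal_closure G H \<subseteq> K' <#> H"
    unfolding normal_closure_def by (rule generate_subgroup_incl[OF _ sgM])
  hence gM: "g \<in> K' <#> H" using ncl Suc.prems by blast
  thus ?case unfolding K'_def set_mult_def by blast
qed

lemma stab_HK: "\<exists>n. H \<inter> Kser G (Suc n) = H \<inter> Kser G n"
proof (rule ccontr)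
  assume "\<not> ?thesis"
  hence ne: "\<And>n. H \<inter> Kser G (Suc n) \<noteq> H \<inter> Kser G n" by blast
  have lt: "card (H \<inter> Kser G (Suc n)) < card (H \<inter> Kser G n)" for n
  proof (rule psubset_card_mono)
    show "finite (H \<inter> Kser G n)" using Hfin by simp
    show "H \<inter> Kser G (Suc n) \<subset> H \<inter> Kser G n" using ne[of n] Kser_Suc_sub[of n] by blast
  qed
  have "card (H \<inter> Kser G n) + n \<le> card (H \<inter> Kser G 0)" for n
  proof (induction n)
    case 0 show ?case by simp
  next
    case (Suc n) thus ?case using lt[of n] by simp
  qed
  moreover have "card (H \<inter> Kser G 0) \<le> card H" using Hfin by (simp add: card_mono)
  ultimately have "card (H \<inter> Kser G (card H + 1)) + (card H + 1) \<le> card H" by (meson le_trans)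
  thus False by simp
qed

definition n0 where "n0 = (SOME n. H \<inter> Kser G (Suc n) = H \<inter> Kser G n)"
definition L where "L = Kser G n0"

lemma L_stab: "Kser G (Suc n0) = L"
proof -
  have e: "H \<inter> Kser G (Suc n0) = H \<inter> Kser G n0"
    unfolding n0_def using stab_HK by (rule someI_ex)
  show ?thesis unfolding L_def
  proof
    show "Kser G (Suc n0) \<subseteq> Kser G n0" by (rule Kser_Suc_sub)
    show "Kser G n0 \<subseteq> Kser G (Suc n0)"
    proof
      fix k assume k: "k \<in> Kser G n0"
      have kc: "k \<in> carrier G" using k Kser_sub_carrier by blast
      obtain k' h where kh: "k' \<in> Kser G (Suc n0)" "h \<in> H" "k = k' \<otimes> h" using KH[OF kc] by blast
      have k'c: "k' \<in> carrier G" using kh Kser_sub_carrier by blast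
      have hc: "h \<in> carrier G" using kh Hc by blast
      have sg: "subgroup (Kser G n0) G" using Kser_normal normal_imp_subgroup by blast
      have sg1: "subgroup (Kser G (Suc n0)) G" using Kser_normal normal_imp_subgroup by blast
      have "k' \<in> Kser G n0" using kh Kser_Suc_sub by blast
      hence "inv k' \<otimes> k \<in> Kser G n0" using k sg by (meson subgroup.m_closed subgroup.m_inv_closed)
      moreover have "inv k' \<otimes> k = h" using kh k'c hc by simp
      ultimately have "h \<in> Kser G (Suc n0)" using e kh by blast
      thus "k \<in> Kser G (Suc n0)" using kh sg1 subgroup.m_closed by metis
    qed
  qed
qed

lemma L_normal: "L \<lhd> G" unfolding L_def by (rule Kser_normal)
lemma L_sg: "subgroup L G" using L_normal normal_imp_subgroup by blast
lemma Lc: "L \<subseteq> carrier G" using L_sg subgroup.subset by blast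
lemma L_gen: "generate G {cm G k x | k x. k \<in> L \<and> x \<in> carrier G} = L"
  using L_stab unfolding L_def by simp
lemma L_KH: "g \<in> carrier G \<Longrightarrow> \<exists>k\<in>L. \<exists>h\<in>H. g = k \<otimes> h"
  unfolding L_def by (rule KH)

end

context group begin

lemma conj_pow: "g \<in> carrier G \<Longrightarrow> a \<in> carrier G \<Longrightarrow>
  g \<otimes> a [^] (k::nat) \<otimes> inv g = (g \<otimes> a \<otimes> inv g) [^] k"
proof (induction k)
  case 0 thus ?case by simp
next
  case (Suc k)
  have "(g \<otimes> a \<otimes> inv g) [^] Suc k = (g \<otimes> a [^] k \<otimes> inv g) \<otimes> (g \<otimes> a \<otimes> inv g)"
    using Suc by simp
  also have "\<dots> = g \<otimes> a [^] Suc k \<otimes> inv g" using Suc.prems by (simp add: m_assoc)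
  finally show ?case by simp
qed

lemma gen_conj_closed:
  assumes S: "S \<subseteq> carrier G" and g: "g \<in> carrier G" and cl: "\<And>s. s \<in> S \<Longrightarrow> g \<otimes> s \<otimes> inv g \<in> S"
  shows "v \<in> generate G S \<Longrightarrow> g \<otimes> v \<otimes> inv g \<in> generate G S"
proof (induct v rule: generate.induct)
  case one thus ?case using g generate.one by auto
next
  case (incl h) thus ?case by (rule generate.incl[OF cl])
next
  case (inv h)
  hence h: "h \<in> carrier G" using S by auto
  hence "g \<otimes> (inv h) \<otimes> (inv g) = inv (g \<otimes> h \<otimes> (inv g))"
    using g by (simp add: inv_mult_group m_assoc)
  thus ?case using generate_m_inv_closed[OF S generate.incl[OF cl[OF inv]]] by simp
next
  case (eng h1 h2)
  note in_carrier = eng(1,3)[THEN generate_in_carrier[OF S]]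
  have "g \<otimes> (h1 \<otimes> h2) \<otimes> inv g = (g \<otimes> h1 \<otimes> inv g) \<otimes> (g \<otimes> h2 \<otimes> inv g)"
    using in_carrier g by (simp add: m_assoc)
  thus ?case using generate.eng[OF eng(2,4)] by simp
qed

end

context cn begin

definition Nm :: "nat \<Rightarrow> 'a set" where
  "Nm m = generate G ({cm G a b | a b. a \<in> L \<and> b \<in> L} \<union> {a [^] m | a. a \<in> L})"

lemma Nm_gens_sub: "({cm G a b | a b. a \<in> L \<and> b \<in> L} \<union> {a [^] (m::nat) | a. a \<in> L}) \<subseteq> L"
proof -
  have "cm G a b \<in> L" if "a \<in> L" "b \<in> L" for a b
    using that L_sg unfolding cm_def
    by (meson subgroup.m_closed subgroup.m_inv_closed)
  moreover have "a [^] m \<in> L" if "a \<in> L" for a using subgroup_pow_closed[OF L_sg that] .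
  ultimately show ?thesis by blast
qed

lemma Nm_sub_L: "Nm m \<subseteq> L"
  unfolding Nm_def by (rule generate_subgroup_incl[OF Nm_gens_sub L_sg])

lemma Nm_normal: "Nm m \<lhd> G"
  unfolding Nm_def
proof (rule normal_generateI)
  show "({cm G a b | a b. a \<in> L \<and> b \<in> L} \<union> {a [^] m | a. a \<in> L}) \<subseteq> carrier G"
    using Nm_gens_sub Lc by blast
  fix h g assume h: "h \<in> {cm G a b | a b. a \<in> L \<and> b \<in> L} \<union> {a [^] m | a. a \<in> L}"
    and g: "g \<in> carrier G"
  from h show "g \<otimes> h \<otimes> inv g \<in> {cm G a b | a b. a \<in> L \<and> b \<in> L} \<union> {a [^] m | a. a \<in> L}"
  proof
    assume "h \<in> {cm G a b | a b. a \<in> L \<and> b \<in> L}"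
    then obtain a b where ab: "h = cm G a b" "a \<in> L" "b \<in> L" by blast
    have ac: "a \<in> carrier G" "b \<in> carrier G" using ab Lc by auto
    have "g \<otimes> h \<otimes> inv g = cm G (g \<otimes> a \<otimes> inv g) (g \<otimes> b \<otimes> inv g)"
      using cm_conj[OF ac(2) ac(1) g] ab by simp
    moreover have "g \<otimes> a \<otimes> inv g \<in> L" "g \<otimes> b \<otimes> inv g \<in> L"
      using normal.inv_op_closed2[OF L_normal g] ab by auto
    ultimately show ?thesis by blast
  next
    assume "h \<in> {a [^] m | a. a \<in> L}"
    then obtain a where a: "h = a [^] m" "a \<in> L" by blast
    have ac: "a \<in> carrier G" using a Lc by auto
    have "g \<otimes> h \<otimes> inv g = (g \<otimes> a \<otimes> inv g) [^] m" using conj_pow[OF g ac] a by simp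
    moreover have "g \<otimes> a \<otimes> inv g \<in> L" using normal.inv_op_closed2[OF L_normal g] a by auto
    ultimately show ?thesis by blast
  qed
qed

end

locale cnm = cn +
  fixes m :: nat
  assumes mpos: "0 < m"
begin

abbreviation "N \<equiv> Nm m"

definition pr :: "'a \<Rightarrow> 'a set" where "pr a = N #> a"

lemma Nn: "N \<lhd> G" by (rule Nm_normal)
lemma Nsg: "subgroup N G" using Nn normal_imp_subgroup by blast
lemma NL: "N \<subseteq> L" by (rule Nm_sub_L)
lemma Nc: "N \<subseteq> carrier G" using Nsg subgroup.subset by blast

lemma Qgroup: "group (G Mod N)" by (rule normal.factorgroup_is_group[OF Nn])

lemma pr_hom: "group_hom G (G Mod N) pr"
  unfolding group_hom_def group_hom_axioms_def pr_def
  using is_group Qgroup normal.r_coset_hom_Mod[OF Nn] by blast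

lemma pr_mult_N: "n \<in> N \<Longrightarrow> w \<in> carrier G \<Longrightarrow> pr (n \<otimes> w) = pr w"
proof -
  assume n: "n \<in> N" and w: "w \<in> carrier G"
  have nc: "n \<in> carrier G" using n Nc by blast
  have "N #> (n \<otimes> w) = (N #> n) #> w" using coset_mult_assoc[OF Nc nc w] by simp
  also have "\<dots> = N #> w" using coset_join2[OF nc Nsg n] by simp
  finally show ?thesis unfolding pr_def .
qed

lemma pr_eqD: "u \<in> carrier G \<Longrightarrow> w \<in> carrier G \<Longrightarrow> pr u = pr w \<Longrightarrow> \<exists>n\<in>N. u = n \<otimes> w"
proof -
  assume u: "u \<in> carrier G" and w: "w \<in> carrier G" and e: "pr u = pr w"
  have "u \<in> N #> u" by (rule rcos_self[OF u Nsg])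
  hence "u \<in> N #> w" using e unfolding pr_def by simp
  thus ?thesis unfolding r_coset_def by blast
qed

lemma pr_comm: "a \<in> L \<Longrightarrow> b \<in> L \<Longrightarrow> pr a \<otimes>\<^bsub>G Mod N\<^esub> pr b = pr b \<otimes>\<^bsub>G Mod N\<^esub> pr a"
proof -
  assume a: "a \<in> L" and b: "b \<in> L"
  have ac: "a \<in> carrier G" "b \<in> carrier G" using a b Lc by auto
  have cN: "cm G a b \<in> N" unfolding Nm_def using a b by (intro generate.incl) blast
  have e: "a \<otimes> b = cm G a b \<otimes> (b \<otimes> a)" using ac unfolding cm_def by (simp add: m_assoc)
  have "pr a \<otimes>\<^bsub>G Mod N\<^esub> pr b = pr (a \<otimes> b)" using group_hom.hom_mult[OF pr_hom ac] by simp
  also have "\<dots> = pr (b \<otimes> a)" using e pr_mult_N[OF cN] ac by simp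
  also have "\<dots> = pr b \<otimes>\<^bsub>G Mod N\<^esub> pr a" using group_hom.hom_mult[OF pr_hom ac(2) ac(1)] by simp
  finally show ?thesis .
qed

lemma pr_pow: "a \<in> L \<Longrightarrow> pr a [^]\<^bsub>G Mod N\<^esub> m = \<one>\<^bsub>G Mod N\<^esub>"
proof -
  assume a: "a \<in> L"
  have ac: "a \<in> carrier G" using a Lc by auto
  have aN: "a [^] m \<in> N" unfolding Nm_def using a by (intro generate.incl) blast
  have "pr a [^]\<^bsub>G Mod N\<^esub> m = pr (a [^] m)" using group_hom.hom_nat_pow[OF pr_hom ac] by simp
  also have "\<dots> = N" unfolding pr_def using coset_join2[OF _ Nsg aN] ac by simp
  finally show ?thesis by simp
qed

end

context cnm begin

lemma y_bound: assumes yL: "y \<in> L" shows "y \<in> Wser G L N (Suc (m ^ card H))"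
proof -
  interpret Q: group "G Mod N" by (rule Qgroup)
  interpret P: group_hom G "G Mod N" pr by (rule pr_hom)
  have yc: "y \<in> carrier G" using yL Lc by blast
  define Sy where "Sy = (\<lambda>h. h \<otimes> y \<otimes> inv h) ` H"
  have SyL: "Sy \<subseteq> L" unfolding Sy_def using normal.inv_op_closed2[OF L_normal _ yL] Hc by blast
  have Syc: "Sy \<subseteq> carrier G" using SyL Lc by blast
  have Syfin: "finite Sy" unfolding Sy_def using Hfin by simp
  have Sycard: "card Sy \<le> card H" unfolding Sy_def using Hfin by (rule card_image_le)
  define GS where "GS = generate G Sy"
  have GSsg: "subgroup GS G" unfolding GS_def by (rule generate_is_subgroup[OF Syc])
  have GSL: "GS \<subseteq> L" unfolding GS_def by (rule generate_subgroup_incl[OF SyL L_sg])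
  have GSc: "GS \<subseteq> carrier G" using GSL Lc by blast
  have GSconj: "h \<otimes> v \<otimes> inv h \<in> GS" if h: "h \<in> H" and v: "v \<in> GS" for h v
  proof -
    have hc: "h \<in> carrier G" using h Hc by blast
    show ?thesis unfolding GS_def
    proof (rule gen_conj_closed[OF Syc hc])
      show "v \<in> generate G Sy" using v unfolding GS_def .
      fix s assume "s \<in> Sy"
      then obtain h' where h': "h' \<in> H" "s = h' \<otimes> y \<otimes> inv h'" unfolding Sy_def by blast
      have h'c: "h' \<in> carrier G" using h' Hc by blast
      have "h \<otimes> s \<otimes> inv h = (h \<otimes> h') \<otimes> y \<otimes> inv (h \<otimes> h')"
        using h' hc h'c yc by (simp add: m_assoc inv_mult_group)
      moreover have "h \<otimes> h' \<in> H" using subgroup.m_closed[OF Hsub h h'(1)] .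
      ultimately show "h \<otimes> s \<otimes> inv h \<in> Sy" unfolding Sy_def by blast
    qed
  qed
  define Ubar where "Ubar = pr ` GS"
  have Ubar_gen: "Ubar = generate (G Mod N) (pr ` Sy)"
    unfolding Ubar_def GS_def using P.generate_img[OF Syc] by simp
  have prSyc: "pr ` Sy \<subseteq> carrier (G Mod N)" using Syc P.hom_closed by blast
  have bnd: "finite Ubar \<and> card Ubar \<le> m ^ card (pr ` Sy)"
    unfolding Ubar_gen
  proof (rule Q.gen_comm_bound[OF _ prSyc _ _ mpos])
    show "finite (pr ` Sy)" using Syfin by simp
    show "\<And>a b. a \<in> pr ` Sy \<Longrightarrow> b \<in> pr ` Sy \<Longrightarrow> a \<otimes>\<^bsub>G Mod N\<^esub> b = b \<otimes>\<^bsub>G Mod N\<^esub> a"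
      using pr_comm SyL by blast
    show "\<And>a. a \<in> pr ` Sy \<Longrightarrow> a [^]\<^bsub>G Mod N\<^esub> m = \<one>\<^bsub>G Mod N\<^esub>"
      using pr_pow SyL by blast
  qed
  have "card (pr ` Sy) \<le> card H" using card_image_le[OF Syfin, of pr] Sycard by linarith
  hence "m ^ card (pr ` Sy) \<le> m ^ card H" using mpos by (intro power_increasing) auto
  hence finU: "finite Ubar" and cardU: "card Ubar \<le> m ^ card H" using bnd by auto
  define U where "U = {u \<in> carrier G. \<exists>v\<in>GS. pr u = pr v}"
  have Uc: "U \<subseteq> carrier G" unfolding U_def by blast
  have yU: "y \<in> U"
  proof -
    have "y = \<one> \<otimes> y \<otimes> inv \<one>" using yc by simp
    hence "y \<in> Sy" unfolding Sy_def using subgroup.one_closed[OF Hsub] by blast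
    hence "y \<in> GS" unfolding GS_def by (rule generate.incl)
    thus ?thesis unfolding U_def using yc by blast
  qed
  have UL: "U \<subseteq> L"
  proof
    fix u assume "u \<in> U"
    then obtain v where u: "u \<in> carrier G" "v \<in> GS" "pr u = pr v" unfolding U_def by blast
    obtain n where n: "n \<in> N" "u = n \<otimes> v" using pr_eqD[OF u(1) _ u(3)] u(2) GSc by blast
    show "u \<in> L" using n u(2) NL GSL subgroup.m_closed[OF L_sg] by auto
  qed
  have Ucl: "cm G u x \<in> U" if uU: "u \<in> U" and x: "x \<in> carrier G" for u x
  proof -
    obtain v where u: "u \<in> carrier G" "v \<in> GS" "pr u = pr v" using uU unfolding U_def by blast
    have vc: "v \<in> carrier G" using u GSc by blast
    obtain n where n: "n \<in> N" "u = n \<otimes> v" using pr_eqD[OF u(1) vc u(3)] by blast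
    have nc: "n \<in> carrier G" using n Nc by blast
    obtain k h where kh: "k \<in> L" "h \<in> H" "x = k \<otimes> h" using L_KH[OF x] by blast
    have kc: "k \<in> carrier G" and hc: "h \<in> carrier G" using kh Lc Hc by auto
    define w where "w = h \<otimes> u \<otimes> inv h"
    have wL: "w \<in> L" unfolding w_def using normal.inv_op_closed2[OF L_normal hc] UL uU by blast
    have wc: "w \<in> carrier G" using wL Lc by blast
    have e1: "x \<otimes> u \<otimes> inv x = cm G k w \<otimes> w"
      unfolding kh(3) w_def cm_def using kc hc u(1) by (simp add: m_assoc inv_mult_group)
    have cmN: "cm G k w \<in> N" unfolding Nm_def using kh(1) wL by (intro generate.incl) blast
    have p1: "pr (x \<otimes> u \<otimes> inv x) = pr w" using e1 pr_mult_N[OF cmN wc] by simp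
    have e2: "w = (h \<otimes> n \<otimes> inv h) \<otimes> (h \<otimes> v \<otimes> inv h)"
      unfolding w_def n(2) using hc nc vc by (simp add: m_assoc)
    have hnN: "h \<otimes> n \<otimes> inv h \<in> N" using normal.inv_op_closed2[OF Nn hc n(1)] .
    have p2: "pr w = pr (h \<otimes> v \<otimes> inv h)" using e2 pr_mult_N[OF hnN] hc vc by simp
    define v' where "v' = v \<otimes> inv (h \<otimes> v \<otimes> inv h)"
    have v'GS: "v' \<in> GS" unfolding v'_def using GSconj[OF kh(2) u(2)] u(2) GSsg
      by (meson subgroup.m_closed subgroup.m_inv_closed)
    have e3: "cm G u x = u \<otimes> inv (x \<otimes> u \<otimes> inv x)"
      unfolding cm_def using u(1) x by (simp add: m_assoc inv_mult_group)
    have xux: "x \<otimes> u \<otimes> inv x \<in> carrier G" using x u(1) by simp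
    have hvh: "h \<otimes> v \<otimes> inv h \<in> carrier G" using hc vc by simp
    have "pr (cm G u x) = pr u \<otimes>\<^bsub>G Mod N\<^esub> inv\<^bsub>G Mod N\<^esub> pr (x \<otimes> u \<otimes> inv x)"
      unfolding e3 using u(1) xux by simp
    also have "\<dots> = pr v \<otimes>\<^bsub>G Mod N\<^esub> inv\<^bsub>G Mod N\<^esub> pr (h \<otimes> v \<otimes> inv h)"
      using u(3) p1 p2 by simp
    also have "\<dots> = pr v'" unfolding v'_def using vc hvh by simp
    finally show ?thesis unfolding U_def using v'GS u(1) x by auto
  qed
  have Wp: "Wser G L N k \<lhd> G \<and> N \<subseteq> Wser G L N k \<and> Wser G L N k \<subseteq> L" for k
    by (rule Wser_props[OF L_normal Nn NL])
  define f where "f k = pr ` (U \<inter> Wser G L N k)" for k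
  have fsub: "f k \<subseteq> Ubar" for k
  proof
    fix z assume "z \<in> f k"
    then obtain u where "u \<in> U" "z = pr u" unfolding f_def by blast
    thus "z \<in> Ubar" unfolding U_def Ubar_def by blast
  qed
  have chain: "U \<subseteq> Wser G L N k \<or> k \<le> card (f k)" for k
  proof (induction k)
    case 0 thus ?case by simp
  next
    case (Suc k)
    show ?case
    proof (cases "U \<subseteq> Wser G L N k")
      case True thus ?thesis using Wser_Suc_mono[OF L_normal Nn NL, of k] by blast
    next
      case False
      hence kle: "k \<le> card (f k)" using Suc.IH by blast
      have Wsg: "subgroup (Wser G L N k) G" using Wp[of k] normal_imp_subgroup by blast
      have one: "\<one> \<in> Wser G L N k" using subgroup.one_closed[OF Wsg] .
      obtain u where u: "u \<in> U" "u \<notin> Wser G L N k" "\<forall>x\<in>carrier G. cm G u x \<in> Wser G L N k"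
        using hyp_section[OF hyp Uc one Ucl False] by blast
      have uW: "u \<in> Wser G L N (Suc k)" using u UL by auto
      have mono: "f k \<subseteq> f (Suc k)" unfolding f_def
        using Wser_Suc_mono[OF L_normal Nn NL, of k] by blast
      have in1: "pr u \<in> f (Suc k)" unfolding f_def using u(1) uW by blast
      have nin: "pr u \<notin> f k"
      proof
        assume "pr u \<in> f k"
        then obtain w where w: "w \<in> U" "w \<in> Wser G L N k" "pr u = pr w" unfolding f_def by auto
        obtain n where n: "n \<in> N" "u = n \<otimes> w" using pr_eqD[of u w] w u(1) Uc by blast
        have "u \<in> Wser G L N k" using n w(2) Wp[of k] subgroup.m_closed[OF Wsg] by auto
        thus False using u(2) by blast
      qed
      have "f k \<subset> f (Suc k)" using mono in1 nin by blast
      moreover have "finite (f (Suc k))" using fsub finU finite_subset by blast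
      ultimately have "card (f k) < card (f (Suc k))" by (rule psubset_card_mono[rotated])
      thus ?thesis using kle by simp
    qed
  qed
  have "U \<subseteq> Wser G L N (Suc (m ^ card H))"
  proof (rule ccontr)
    assume "\<not> ?thesis"
    hence "Suc (m ^ card H) \<le> card (f (Suc (m ^ card H)))" using chain by blast
    moreover have "card (f (Suc (m ^ card H))) \<le> card Ubar" using fsub finU by (rule card_mono[rotated])
    ultimately show False using cardU by simp
  qed
  thus ?thesis using yU by blast
qed

lemma L_sub_N: "L \<subseteq> N"
proof -
  have "L \<subseteq> Wser G L N (Suc (m ^ card H))" using y_bound by blast
  thus ?thesis by (rule Wser_top[OF L_normal Nn NL L_gen])
qed

end

context cn begin

lemma L_abelian: "a \<in> L \<Longrightarrow> b \<in> L \<Longrightarrow> a \<otimes> b = b \<otimes> a"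
proof -
  have "carrier G \<subseteq> {g. g \<in> L \<longrightarrow> (\<forall>y\<in>L. g \<otimes> y = y \<otimes> g)}"
  proof (rule hyp_induct[OF hyp])
    show "\<one> \<in> {g. g \<in> L \<longrightarrow> (\<forall>y\<in>L. g \<otimes> y = y \<otimes> g)}" using Lc by auto
    fix g assume g: "g \<in> carrier G"
      and IH: "\<forall>x\<in>carrier G. cm G g x \<in> {g. g \<in> L \<longrightarrow> (\<forall>y\<in>L. g \<otimes> y = y \<otimes> g)}"
    have "\<forall>y\<in>L. g \<otimes> y = y \<otimes> g" if gL: "g \<in> L"
    proof -
      obtain m :: nat where m: "0 < m" "g [^] m = \<one>" using per g unfolding periodic_group_def by blast
      have cnmI: "cnm G H m" unfolding cnm_def cnm_axioms_def using cn_axioms m(1) by blast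
      have LN: "L \<subseteq> Nm m" using cnm.L_sub_N[OF cnmI] .
      define c where "c y = cm G g y" for y
      have cc: "y \<in> carrier G \<Longrightarrow> c y \<in> carrier G" for y unfolding c_def using g by simp
      have cL: "c y \<in> L" if y: "y \<in> L" for y
      proof -
        have yc: "y \<in> carrier G" using y Lc by blast
        have "g \<otimes> y \<otimes> inv g \<in> L" using normal.inv_op_closed2[OF L_normal g y] .
        hence "(g \<otimes> y \<otimes> inv g) \<otimes> inv y \<in> L"
          using subgroup.m_closed[OF L_sg] subgroup.m_inv_closed[OF L_sg y] by blast
        thus ?thesis unfolding c_def using cm_split2[OF yc g] by simp
      qed
      have CL: "c y \<otimes> z = z \<otimes> c y" if y: "y \<in> L" and z: "z \<in> L" for y z
      proof -
        have yc: "y \<in> carrier G" using y Lc by blast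
        have "cm G g y \<in> L \<longrightarrow> (\<forall>z\<in>L. cm G g y \<otimes> z = z \<otimes> cm G g y)" using IH yc by blast
        thus ?thesis using cL[OF y] z unfolding c_def by blast
      qed
      have hom: "c (y \<otimes> z) = c y \<otimes> c z" if y: "y \<in> L" and z: "z \<in> L" for y z
      proof -
        have yc: "y \<in> carrier G" and zc: "z \<in> carrier G" using y z Lc by auto
        have "c (y \<otimes> z) = c y \<otimes> (y \<otimes> c z \<otimes> inv y)" unfolding c_def using cm_mult_right[OF g yc zc] .
        also have "y \<otimes> c z \<otimes> inv y = c z \<otimes> y \<otimes> inv y" using CL[OF z y] by simp
        also have "\<dots> = c z" using cc[OF zc] yc by (simp add: m_assoc)
        finally show ?thesis .
      qed
      have c1: "c \<one> = \<one>" unfolding c_def using g by simp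
      have cinv: "c (inv y) = inv (c y)" if y: "y \<in> L" for y
      proof -
        have yc: "y \<in> carrier G" using y Lc by blast
        have iL: "inv y \<in> L" using subgroup.m_inv_closed[OF L_sg y] .
        have "c (inv y) \<otimes> c y = \<one>" using hom[OF iL y] c1 yc by simp
        thus ?thesis using inv_equality cc yc by (metis inv_closed)
      qed
      have cg: "c y \<otimes> g = g \<otimes> c y" if y: "y \<in> L" for y using CL[OF y gL] .
      have gy: "g \<otimes> y = c y \<otimes> y \<otimes> g" if yc: "y \<in> carrier G" for y
        unfolding c_def cm_def using g yc by (simp add: m_assoc)
      have powk: "g [^] (k::nat) \<otimes> y = c y [^] k \<otimes> y \<otimes> g [^] k" if y: "y \<in> L" for y k
      proof (induction k)
        case 0 thus ?case using y Lc by auto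
      next
        case (Suc k)
        have yc: "y \<in> carrier G" using y Lc by blast
        have cyc: "c y \<in> carrier G" using cc[OF yc] .
        have comm: "c y [^] k \<otimes> g = g \<otimes> c y [^] k"
          using group_commutes_pow[OF cg[OF y] cyc g] .
        have eg: "g [^] Suc k = g \<otimes> g [^] k" by (rule nat_pow_Suc2[OF g])
        have ec: "c y [^] Suc k = c y [^] k \<otimes> c y" by simp
        have "g [^] Suc k \<otimes> y = g \<otimes> (g [^] k \<otimes> y)" unfolding eg using g yc by (simp add: m_assoc)
        also have "\<dots> = g \<otimes> (c y [^] k \<otimes> y \<otimes> g [^] k)" using Suc by simp
        also have "\<dots> = (g \<otimes> c y [^] k) \<otimes> y \<otimes> g [^] k" using g yc cyc by (simp add: m_assoc)
        also have "\<dots> = (c y [^] k \<otimes> g) \<otimes> y \<otimes> g [^] k" using comm by simp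
        also have "\<dots> = c y [^] k \<otimes> (g \<otimes> y) \<otimes> g [^] k" using g yc cyc by (simp add: m_assoc)
        also have "\<dots> = c y [^] k \<otimes> (c y \<otimes> y \<otimes> g) \<otimes> g [^] k" using gy[OF yc] by simp
        also have "\<dots> = c y [^] Suc k \<otimes> y \<otimes> g [^] Suc k"
          unfolding eg ec using g yc cyc by (simp add: m_assoc)
        finally show ?case .
      qed
      have cpow: "c y [^] m = \<one>" if y: "y \<in> L" for y
      proof -
        have yc: "y \<in> carrier G" using y Lc by blast
        have "y = c y [^] m \<otimes> y" using powk[OF y, of m] m(2) yc cc[OF yc] by simp
        thus ?thesis using yc cc[OF yc] by simp
      qed
      have cpowa: "c (a [^] (k::nat)) = c a [^] k" if a: "a \<in> L" for a k
      proof (induction k)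
        case 0 thus ?case using c1 by simp
      next
        case (Suc k)
        have "a [^] k \<in> L" using subgroup_pow_closed[OF L_sg a] .
        hence "c (a [^] k \<otimes> a) = c (a [^] k) \<otimes> c a" using hom a by blast
        thus ?case using Suc by simp
      qed
      have K0sg: "subgroup {y \<in> L. c y = \<one>} G"
      proof (rule subgroupI)
        show "{y \<in> L. c y = \<one>} \<subseteq> carrier G" using Lc by blast
        show "{y \<in> L. c y = \<one>} \<noteq> {}" using c1 subgroup.one_closed[OF L_sg] by blast
      next
        fix y assume "y \<in> {y \<in> L. c y = \<one>}"
        thus "inv y \<in> {y \<in> L. c y = \<one>}" using cinv subgroup.m_inv_closed[OF L_sg] by auto
      next
        fix y z assume "y \<in> {y \<in> L. c y = \<one>}" "z \<in> {y \<in> L. c y = \<one>}"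
        thus "y \<otimes> z \<in> {y \<in> L. c y = \<one>}" using hom subgroup.m_closed[OF L_sg] by auto
      qed
      have gens: "({cm G a b | a b. a \<in> L \<and> b \<in> L} \<union> {a [^] m | a. a \<in> L}) \<subseteq> {y \<in> L. c y = \<one>}"
      proof
        fix z assume z: "z \<in> {cm G a b | a b. a \<in> L \<and> b \<in> L} \<union> {a [^] m | a. a \<in> L}"
        have zL: "z \<in> L" using z Nm_gens_sub by blast
        from z show "z \<in> {y \<in> L. c y = \<one>}"
        proof
          assume "z \<in> {cm G a b | a b. a \<in> L \<and> b \<in> L}"
          then obtain a b where ab: "z = cm G a b" "a \<in> L" "b \<in> L" by blast
          have ia: "inv a \<in> L" and ib: "inv b \<in> L" using ab subgroup.m_inv_closed[OF L_sg] by auto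
          have abL: "a \<otimes> b \<in> L" using ab subgroup.m_closed[OF L_sg] by auto
          have abaL: "a \<otimes> b \<otimes> inv a \<in> L" using abL ia subgroup.m_closed[OF L_sg] by auto
          have "c z = c a \<otimes> c b \<otimes> inv (c a) \<otimes> inv (c b)"
            unfolding ab(1) cm_def using hom abaL ib hom abL ia hom ab cinv by simp
          also have "\<dots> = cm G (c a) (c b)" unfolding cm_def ..
          also have "\<dots> = \<one>" using cm_eq_one[of "c a" "c b"] CL[OF ab(2) cL[OF ab(3)]] cL ab Lc by blast
          finally show ?thesis using zL by blast
        next
          assume "z \<in> {a [^] m | a. a \<in> L}"
          then obtain a where a: "z = a [^] m" "a \<in> L" by blast
          have "c z = \<one>" using cpowa[OF a(2)] cpow[OF a(2)] a(1) by simp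
          thus ?thesis using zL by blast
        qed
      qed
      have "Nm m \<subseteq> {y \<in> L. c y = \<one>}" unfolding Nm_def by (rule generate_subgroup_incl[OF gens K0sg])
      hence "\<forall>y\<in>L. c y = \<one>" using LN by blast
      thus ?thesis unfolding c_def using cm_eq_one g Lc by blast
    qed
    thus "g \<in> {g. g \<in> L \<longrightarrow> (\<forall>y\<in>L. g \<otimes> y = y \<otimes> g)}" by blast
  qed
  thus "a \<in> L \<Longrightarrow> b \<in> L \<Longrightarrow> a \<otimes> b = b \<otimes> a" using Lc by blast
qed

end

theorem corollary3p4:
  fixes G :: "('a, 'b) monoid_scheme"
  assumes "group G"
    and "periodic_group G"
    and "hypercentral G"
    and "\<exists>H. finite H \<and> contranormal G H"
  shows "\<exists>A. A \<lhd> G \<and> comm_group (G\<lparr>carrier := A\<rparr>) \<and> finite (rcosets\<^bsub>G\<^esub> A)"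
proof -
  obtain H where H: "finite H" "contranormal G H" using assms(4) by blast
  interpret C: cn G H
    unfolding cn_def cn_axioms_def using assms(1-3) H unfolding contranormal_def by blast
  have nL: "C.L \<lhd> G" by (rule C.L_normal)
  have grp: "group (G\<lparr>carrier := C.L\<rparr>)" by (rule subgroup.subgroup_is_group[OF C.L_sg assms(1)])
  have cg: "comm_group (G\<lparr>carrier := C.L\<rparr>)"
    by (rule group.group_comm_groupI[OF grp]) (use C.L_abelian in simp)
  have "rcosets\<^bsub>G\<^esub> C.L \<subseteq> (\<lambda>h. C.L #>\<^bsub>G\<^esub> h) ` H"
  proof
    fix R assume "R \<in> rcosets\<^bsub>G\<^esub> C.L"
    then obtain g where g: "g \<in> carrier G" "R = C.L #>\<^bsub>G\<^esub> g" unfolding RCOSETS_def by blast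
    obtain k h where kh: "k \<in> C.L" "h \<in> H" "g = k \<otimes>\<^bsub>G\<^esub> h" using C.L_KH[OF g(1)] by blast
    have kc: "k \<in> carrier G" and hc: "h \<in> carrier G" using kh C.Lc C.Hc by auto
    have "C.L #>\<^bsub>G\<^esub> g = (C.L #>\<^bsub>G\<^esub> k) #>\<^bsub>G\<^esub> h"
      using C.coset_mult_assoc[OF C.Lc kc hc] kh by simp
    also have "\<dots> = C.L #>\<^bsub>G\<^esub> h" using C.coset_join2[OF kc C.L_sg kh(1)] by simp
    finally show "R \<in> (\<lambda>h. C.L #>\<^bsub>G\<^esub> h) ` H" using g kh by blast
  qed
  hence "finite (rcosets\<^bsub>G\<^esub> C.L)" using H(1) finite_surj by blast
  thus ?thesis using nL cg by blast
qed

end
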